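(* Let $p$ be an odd prime. Then for every $\tau\in\mathbb{H}$, $$\prod_{k=0}^{p-1}\theta_3\Big(\tau+\frac{2k}{p}\Big)=\frac{\theta_3^{p+1}(p\tau)}{\theta_3(p^2\tau)}.$$
   Context: $\mathbb{H}=\{\tau\in\mathbb{C}:\Im(\tau)>0\}$. For $\tau\in\mathbb{H}$, $\theta_3(\tau)=1+2\sum_{\nu=1}^{\infty}e^{\pi i\nu^2\tau}$. *)

theory Defs
  imports "HOL-Analysis.Analysis"
begin

definition theta3 :: "complex \<Rightarrow> complex" where
  "theta3 \<tau> = 1 + 2 * (\<Sum>\<nu>. exp (of_real pi * \<i> * of_nat (Suc \<nu>)^2 * \<tau>))"

end

theory Submission
  imports Defs "HOL-Analysis.Analysis" "HOL-Computational_Algebra.Fundamental_Theorem_Algebra"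
begin

lemma roots_unity_poly:
  assumes n: "n > 0"
  shows "(\<Prod>k<n. X - cis (2 * pi * real k / real n)) = X ^ n - (1::complex)"
proof -
  define P :: "complex poly" where "P = monom 1 n - 1"
  have polyP: "poly P z = z ^ n - 1" for z by (simp add: P_def poly_monom)
  have P0: "P \<noteq> 0" proof assume "P = 0" hence "poly P 0 = 0" by simp
    with polyP[of 0] n show False by (simp add: power_0_left) qed
  have "rsquarefree P"
    unfolding rsquarefree_roots
  proof (intro allI notI)
    fix a assume "poly P a = 0 \<and> poly (pderiv P) a = 0"
    hence h1: "a ^ n = 1" and h2: "poly (pderiv P) a = 0" using polyP by auto
    have "pderiv P = monom (of_nat n) (n - 1)" by (simp add: P_def pderiv_diff pderiv_monom)
    with h2 have "of_nat n * a ^ (n-1) = 0" by (simp add: poly_monom)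
    with n have "a = 0" by simp
    with h1 n show False by (simp add: power_0_left)
  qed
  from complex_poly_decompose_rsquarefree[OF this]
  have dec: "smult (lead_coeff P) (\<Prod>z|poly P z = 0. [:-z, 1:]) = P" .
  have "lead_coeff P = 1"
  proof -
    show ?thesis
    proof (cases "n = 0")
      case False
      have "coeff P n = 1" using False by (simp add: P_def coeff_monom)
      moreover have "degree P = n"
      proof (rule antisym)
        show "degree P \<le> n" unfolding P_def by (rule degree_diff_le) (auto simp: degree_monom_le)
        show "n \<le> degree P" using \<open>coeff P n = 1\<close> by (intro le_degree) auto
      qed
      ultimately show ?thesis by simp
    qed (use n in auto)
  qed
  with dec have dec': "(\<Prod>z|poly P z = 0. [:-z, 1:]) = P" by simp
  have "{z. poly P z = 0} = {z. z ^ n = 1}" by (auto simp: polyP)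
  hence "(\<Prod>z\<in>{z. z ^ n = 1}. X - z) = poly P X"
    using arg_cong[OF dec', of "\<lambda>Q. poly Q X"] by (simp add: poly_prod)
  also have "(\<Prod>z\<in>{z. z ^ n = 1}. X - z) = (\<Prod>k<n. X - cis (2 * pi * real k / real n))"
    by (rule prod.reindex_bij_betw[OF Complex.bij_betw_roots_unity[OF n], symmetric])
  finally show ?thesis by (simp add: polyP)
qed

lemma cis_pow_k: "cis (2 * pi / real n) ^ k = cis (2 * pi * real k / real n)"
  by (simp only: Complex.DeMoivre) (simp add: mult_ac)

lemma cis_pow_n: "n > 0 \<Longrightarrow> cis (2 * pi / real n) ^ n = 1"
  by (simp add: cis_pow_k)

lemma cyc1:
  assumes n: "n > 0"
  shows "(\<Prod>k<n. 1 - y * cis (2 * pi / real n) ^ k) = 1 - (y::complex) ^ n"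
proof (cases "y = 0")
  case True then show ?thesis using n by (simp add: power_0_left)
next
  case False
  have "(\<Prod>k<n. 1 - y * cis (2 * pi / real n) ^ k) = (\<Prod>k<n. y * (inverse y - cis (2 * pi * real k / real n)))"
    by (intro prod.cong refl) (simp only: cis_pow_k, simp add: False right_diff_distrib)
  also have "\<dots> = y ^ n * (\<Prod>k<n. inverse y - cis (2 * pi * real k / real n))"
    by (simp add: prod.distrib)
  also have "\<dots> = y ^ n * (inverse y ^ n - 1)" by (simp add: roots_unity_poly[OF n])
  also have "\<dots> = 1 - y ^ n" using False by (simp add: right_diff_distrib power_inverse)
  finally show ?thesis .
qed

lemma pow_mod_unity: "(w::complex) ^ n = 1 \<Longrightarrow> w ^ m = w ^ (m mod n)"
proof -
  assume h: "w ^ n = 1"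
  have "w ^ m = w ^ (n * (m div n) + m mod n)" by simp
  also have "\<dots> = (w ^ n) ^ (m div n) * w ^ (m mod n)" by (simp only: power_add power_mult)
  also have "\<dots> = w ^ (m mod n)" by (simp add: h)
  finally show ?thesis .
qed

lemma mod_mult_bij:
  assumes p: "prime (p::nat)" and j: "\<not> p dvd j"
  shows "bij_betw (\<lambda>k. j * k mod p) {..<p} {..<p}"
proof -
  have inj: "inj_on (\<lambda>k. j * k mod p) {..<p}"
  proof (rule inj_onI)
    fix a b assume a: "a \<in> {..<p}" and b: "b \<in> {..<p}" and e: "j * a mod p = j * b mod p"
    show "a = b"
    proof (rule ccontr)
      assume ne: "a \<noteq> b"
      { fix a b :: nat assume ab: "a < b" "b < p" "j * a mod p = j * b mod p"
        have le: "j * a \<le> j * b" using ab by simp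
        have "p dvd j * b - j * a" using iffD1[OF mod_eq_dvd_iff_nat[OF le, of p] ab(3)[symmetric]] .
        hence "p dvd j * (b - a)" by (simp add: diff_mult_distrib2)
        hence "p dvd (b - a)" using prime_dvd_mult_iff[OF p, of j "b - a"] j by simp
        moreover have "0 < b - a" "b - a < p" using ab by auto
        ultimately have False using nat_dvd_not_less by blast }
      note * = this
      show False
      proof (cases "a < b")
        case True then show False using *[of a b] a b e by auto
      next
        case False then have "b < a" using ne by simp
        then show False using *[of b a] a b e by auto
      qed
    qed
  qed
  have p0: "p > 0" using p prime_gt_0_nat by blast
  have sub: "(\<lambda>k. j * k mod p) ` {..<p} \<subseteq> {..<p}" using p0 by auto
  have "(\<lambda>k. j * k mod p) ` {..<p} = {..<p}" by (rule endo_inj_surj[OF _ sub inj]) simp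
  with inj show ?thesis by (simp add: bij_betw_def)
qed

lemma cyc2:
  assumes p: "prime (p::nat)" and j: "\<not> p dvd j"
  shows "(\<Prod>k<p. 1 - y * cis (2 * pi / real p) ^ (j * k)) = 1 - (y::complex) ^ p"
proof -
  have p0: "p > 0" using p prime_gt_0_nat by blast
  define w where "w = cis (2 * pi / real p)"
  have wp: "w ^ p = 1" using p0 by (simp add: w_def cis_pow_n)
  have "(\<Prod>k<p. 1 - y * w ^ (j * k)) = (\<Prod>k<p. 1 - y * w ^ (j * k mod p))"
    by (intro prod.cong refl) (metis pow_mod_unity wp)
  also have "\<dots> = (\<Prod>k<p. 1 - y * w ^ k)"
    by (rule prod.reindex_bij_betw[OF mod_mult_bij[OF p j], of "\<lambda>k. 1 - y * w ^ k"])
  also have "\<dots> = 1 - y ^ p" unfolding w_def by (rule cyc1[OF p0])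
  finally show ?thesis by (simp add: w_def)
qed

lemma cyc2p:
  assumes p: "prime (p::nat)" and "odd p" and j: "\<not> p dvd j"
  shows "(\<Prod>k<p. 1 + y * cis (2 * pi / real p) ^ (j * k)) = 1 + (y::complex) ^ p"
  using cyc2[OF p j, of "-y"] \<open>odd p\<close> by simp

lemma cyc3:
  assumes p: "p > 0" and j: "(p::nat) dvd j"
  shows "cis (2 * pi / real p) ^ (j * k) = 1"
proof -
  obtain m where "j = p * m" using j by blast
  hence "cis (2 * pi / real p) ^ (j * k) = (cis (2 * pi / real p) ^ p) ^ (m * k)"
    by (simp only: power_mult mult.assoc)
  also have "\<dots> = 1" using p by (simp add: cis_pow_n)
  finally show ?thesis .
qed

definition qp :: "complex \<Rightarrow> nat \<Rightarrow> complex" where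
  "qp x n = (\<Prod>i<n. 1 - x ^ Suc i)"

fun qb :: "complex \<Rightarrow> nat \<Rightarrow> nat \<Rightarrow> complex" where
  "qb x 0 k = (if k = 0 then 1 else 0)"
| "qb x (Suc n) 0 = 1"
| "qb x (Suc n) (Suc k) = qb x n k + x ^ Suc k * qb x n (Suc k)"

definition tri :: "nat \<Rightarrow> nat" where "tri k = (\<Sum>i<k. i)"

lemma tri_Suc [simp]: "tri (Suc k) = tri k + k" by (simp add: tri_def)
lemma tri_0 [simp]: "tri 0 = 0" by (simp add: tri_def)
lemma tri2: "2 * tri k = k * (k - 1)"
  by (induction k) (auto simp: algebra_simps)

lemma qb_0 [simp]: "qb x n 0 = 1" by (cases n) auto

lemma qb_gt: "n < k \<Longrightarrow> qb x n k = 0"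
proof (induction n arbitrary: k)
  case 0 then show ?case by simp
next
  case (Suc n) then obtain k' where "k = Suc k'" by (cases k) auto
  with Suc show ?case by simp
qed

lemma qb_nn [simp]: "qb x n n = 1"
  by (induction n) (auto simp: qb_gt)

lemma qp_Suc: "qp x (Suc n) = qp x n * (1 - x ^ Suc n)"
  by (simp add: qp_def)

lemma qb_ratio: "k \<le> n \<Longrightarrow> qb x n k * qp x k * qp x (n - k) = qp x n"
proof (induction n arbitrary: k)
  case 0 then show ?case by (simp add: qp_def)
next
  case (Suc n)
  show ?case
  proof (cases k)
    case 0 then show ?thesis by (simp add: qp_def)
  next
    case (Suc k')
    show ?thesis
    proof (cases "k' = n")
      case True then show ?thesis using Suc by (simp add: qp_def)
    next
      case False
      with Suc \<open>k \<le> Suc n\<close> have kn: "k' < n" by simp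
      have IH1: "qb x n k' * qp x k' * qp x (n - k') = qp x n" using Suc.IH kn by simp
      have IH2: "qb x n (Suc k') * qp x (Suc k') * qp x (n - Suc k') = qp x n" using Suc.IH kn by simp
      have e1: "n - k' = Suc (n - Suc k')" using kn by simp
      have e3: "Suc k' + (n - k') = Suc n" using kn by simp
      have e2: "x ^ Suc k' * x ^ (n - k') = x ^ Suc n"
        by (simp only: power_add[symmetric] e3)
      have "qb x (Suc n) k * qp x k * qp x (Suc n - k)
          = (qb x n k' + x ^ Suc k' * qb x n (Suc k')) * qp x (Suc k') * qp x (n - k')"
        using Suc by simp
      also have "\<dots> = (qb x n k' * qp x k' * qp x (n - k')) * (1 - x ^ Suc k')
          + x ^ Suc k' * (qb x n (Suc k') * qp x (Suc k') * qp x (n - Suc k')) * (1 - x ^ (n - k'))"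
      proof -
        have h1: "qp x (Suc k') = qp x k' * (1 - x ^ Suc k')" by (rule qp_Suc)
        have h2: "qp x (n - k') = qp x (n - Suc k') * (1 - x ^ (n - k'))"
          using qp_Suc[of x "n - Suc k'"] unfolding e1[symmetric] .
        show ?thesis by (simp only: h1 h2) (simp add: algebra_simps)
      qed
      also have "\<dots> = qp x n * (1 - x ^ Suc k') + x ^ Suc k' * qp x n * (1 - x ^ (n - k'))"
        by (simp only: IH1 IH2)
      also have "\<dots> = qp x n * (1 - x ^ Suc k' * x ^ (n - k'))"
        by (simp add: algebra_simps)
      also have "\<dots> = qp x n * (1 - x ^ Suc n)"
        by (simp only: e2)
      also have "\<dots> = qp x (Suc n)" by (simp add: qp_Suc)
      finally show ?thesis .
    qed
  qed
qed

lemma qbin: "(\<Prod>j<N. 1 + x ^ j * t) = (\<Sum>k\<le>N. qb x N k * x ^ tri k * t ^ k)"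
proof (induction N arbitrary: t)
  case 0 then show ?case by simp
next
  case (Suc N)
  define f where "f k = qb x N k * x ^ tri k * x ^ k * t ^ k" for k
  have f0: "f 0 = 1" by (simp add: f_def)
  have fN: "f (Suc N) = 0" by (simp add: f_def qb_gt)
  have S1: "(\<Sum>k\<le>N. f k) = 1 + (\<Sum>k\<le>N. f (Suc k))"
  proof -
    have "(\<Sum>k\<le>N. f k) = (\<Sum>k\<le>Suc N. f k)" using fN by simp
    also have "\<dots> = f 0 + (\<Sum>k\<le>N. f (Suc k))" by (rule sum.atMost_Suc_shift)
    finally show ?thesis using f0 by simp
  qed
  have "(\<Prod>j<Suc N. 1 + x ^ j * t) = (1 + t) * (\<Prod>j<N. 1 + x ^ j * (x * t))"
    by (subst prod.lessThan_Suc_shift) (simp add: mult_ac)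
  also have "\<dots> = (1 + t) * (\<Sum>k\<le>N. qb x N k * x ^ tri k * (x * t) ^ k)"
    by (simp only: Suc.IH)
  also have "\<dots> = (\<Sum>k\<le>N. f k) + (\<Sum>k\<le>N. qb x N k * x ^ tri k * x ^ k * t ^ Suc k)"
    by (simp add: f_def distrib_right sum_distrib_left power_mult_distrib mult_ac sum.distrib)
  also have "\<dots> = 1 + (\<Sum>k\<le>N. f (Suc k)) + (\<Sum>k\<le>N. qb x N k * x ^ tri k * x ^ k * t ^ Suc k)"
    by (simp only: S1)
  also have "\<dots> = 1 + (\<Sum>k\<le>N. f (Suc k) + qb x N k * x ^ tri k * x ^ k * t ^ Suc k)"
    by (simp add: sum.distrib)
  also have "\<dots> = 1 + (\<Sum>k\<le>N. qb x (Suc N) (Suc k) * x ^ tri (Suc k) * t ^ Suc k)"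
    by (intro arg_cong[where f="\<lambda>u. 1 + u"] sum.cong refl) (simp add: f_def algebra_simps power_add)
  also have "\<dots> = (\<Sum>k\<le>Suc N. qb x (Suc N) k * x ^ tri k * t ^ k)"
    by (rule sym, subst sum.atMost_Suc_shift, simp)
  finally show ?case .
qed

lemma tri2i: "int (2 * tri k) = int k * (int k - 1)"
proof -
  have "int (2 * tri k) = int (k * (k - 1))" by (simp only: tri2)
  also have "\<dots> = int k * (int k - 1)" by (cases k) (auto simp: algebra_simps)
  finally show ?thesis .
qed

lemma expo:
  assumes "k \<le> 2 * n" "n > 0"
  shows "2 * tri k + (2*n-1)*(2*n-k) = ((k-n)^2 + (n-k)^2) + (2*tri n + (2*n-1)*n)"
proof -
  have a: "int (2 * tri k) = int k * (int k - 1)" "int (2 * tri n) = int n * (int n - 1)" by (rule tri2i)+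
  have b: "int (2*n-1) = 2 * int n - 1" "int (2*n-k) = 2 * int n - int k" using assms by auto
  have c: "int ((k-n)^2 + (n-k)^2) = (int k - int n)^2"
  proof (cases "k \<le> n")
    case True then show ?thesis by (simp add: of_nat_diff power2_commute)
  next
    case False then show ?thesis by (simp add: of_nat_diff)
  qed
  have l: "int (2 * tri k + (2*n-1)*(2*n-k)) = int k * (int k - 1) + (2 * int n - 1) * (2 * int n - int k)"
    using a b by simp
  have r: "int (((k-n)^2 + (n-k)^2) + (2*tri n + (2*n-1)*n)) = (int k - int n)^2 + (int n * (int n - 1) + (2 * int n - 1) * int n)"
    using a b c by simp
  have "int (2 * tri k + (2*n-1)*(2*n-k)) = int (((k-n)^2 + (n-k)^2) + (2*tri n + (2*n-1)*n))"
    unfolding l r by (simp add: algebra_simps power2_eq_square)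
  then show ?thesis by (simp only: of_nat_eq_iff)
qed

lemma prod_add_split: fixes a b :: nat shows "(\<Prod>j<a+b. f j) = (\<Prod>j<a. f j) * (\<Prod>i<b. f (a + i))"
  by (induction b) (simp_all add: mult_ac)

lemma sum_add_split: fixes a b :: nat shows "(\<Sum>j<a+b. f j) = (\<Sum>j<a. f j) + (\<Sum>i<b. f (a + i))"
  by (induction b) (simp_all add: add_ac)

lemma qbin_hom:
  assumes s: "s \<noteq> 0"
  shows "(\<Prod>j<N. s + x ^ j * t) = (\<Sum>k\<le>N. qb x N k * x ^ tri k * t ^ k * s ^ (N - k))"
proof -
  have "(\<Prod>j<N. s + x ^ j * t) = (\<Prod>j<N. s * (1 + x ^ j * (t / s)))"
    using s by (intro prod.cong refl) (simp add: field_simps)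
  also have "\<dots> = s ^ N * (\<Prod>j<N. 1 + x ^ j * (t / s))" by (simp add: prod.distrib)
  also have "\<dots> = s ^ N * (\<Sum>k\<le>N. qb x N k * x ^ tri k * (t / s) ^ k)" by (simp only: qbin)
  also have "\<dots> = (\<Sum>k\<le>N. qb x N k * x ^ tri k * t ^ k * s ^ (N - k))"
    unfolding sum_distrib_left
  proof (intro sum.cong refl)
    fix k assume "k \<in> {..N}"
    then have "s ^ N = s ^ (N - k) * s ^ k" by (simp add: power_add[symmetric])
    then show "s ^ N * (qb x N k * x ^ tri k * (t / s) ^ k) = qb x N k * x ^ tri k * t ^ k * s ^ (N - k)"
      using s by (simp add: power_divide field_simps)
  qed
  finally show ?thesis .
qed

definition Oq :: "complex \<Rightarrow> nat \<Rightarrow> complex" where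
  "Oq q n = (\<Prod>i<n. 1 + q ^ (2 * i + 1))"

definition Dk :: "nat \<Rightarrow> nat \<Rightarrow> nat" where
  "Dk n k = (k - n)^2 + (n - k)^2"

lemma finite_triple:
  assumes q: "q \<noteq> 0"
  shows "Oq q n ^ 2 = (\<Sum>k\<le>2*n. qb (q^2) (2*n) k * q ^ Dk n k)"
proof (cases "n = 0")
  case True then show ?thesis by (simp add: Oq_def Dk_def)
next
  case False
  then have n: "n > 0" by simp
  define s where "s = q ^ (2*n-1)"
  have s0: "s \<noteq> 0" using q by (simp add: s_def)
  define f where "f j = s + (q^2) ^ j * 1" for j
  define E0 where "E0 = 2 * tri n + (2*n-1)*n"
  have L1: "(\<Prod>j<n. f j) = q ^ (2 * tri n) * Oq q n"
  proof -
    have "(\<Prod>j<n. f j) = (\<Prod>i<n. f (n - Suc i))" by (rule prod.nat_diff_reindex[symmetric])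
    also have "\<dots> = (\<Prod>i<n. q ^ (2 * (n - Suc i)) * (1 + q ^ (2 * i + 1)))"
    proof (intro prod.cong refl)
      fix i assume "i \<in> {..<n}"
      then have e: "2*n - 1 = 2 * (n - Suc i) + (2 * i + 1)" by auto
      have e1: "(q^2)^(n - Suc i) = q^(2*(n-Suc i))" by (simp add: power_mult)
      have e2: "s = q^(2*(n-Suc i)) * q^(2*i+1)" unfolding s_def e power_add ..
      show "f (n - Suc i) = q ^ (2 * (n - Suc i)) * (1 + q ^ (2 * i + 1))"
        unfolding f_def e1 e2 by (simp add: algebra_simps)
    qed
    also have "\<dots> = (\<Prod>i<n. q ^ (2 * (n - Suc i))) * Oq q n" by (simp add: prod.distrib Oq_def)
    also have "(\<Prod>i<n. q ^ (2 * (n - Suc i))) = (\<Prod>i<n. q ^ (2 * i))"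
      by (rule prod.nat_diff_reindex[where g="\<lambda>i. q ^ (2*i)"])
    also have "\<dots> = q ^ (\<Sum>i<n. 2 * i)" by (simp add: power_sum)
    also have "(\<Sum>i<n. 2 * i) = 2 * tri n" by (simp add: tri_def sum_distrib_left)
    finally show ?thesis .
  qed
  have L2: "(\<Prod>i<n. f (n + i)) = s ^ n * Oq q n"
  proof -
    have "(\<Prod>i<n. f (n + i)) = (\<Prod>i<n. s * (1 + q ^ (2 * i + 1)))"
    proof (intro prod.cong refl)
      fix i assume "i \<in> {..<n}"
      have e: "2 * (n + i) = (2*n - 1) + (2 * i + 1)" using n by auto
      have "(q^2)^(n+i) = q^(2*(n+i))" by (simp only: power_mult)
      also have "\<dots> = q^((2*n-1)+(2*i+1))" by (simp only: e)
      also have "\<dots> = s * q^(2*i+1)" by (simp only: power_add s_def)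
      finally have e1: "(q^2)^(n+i) = s * q^(2*i+1)" .
      show "f (n + i) = s * (1 + q ^ (2 * i + 1))"
        unfolding f_def e1 by (simp add: algebra_simps)
    qed
    then show ?thesis by (simp add: prod.distrib Oq_def)
  qed
  have "(\<Prod>j<2*n. f j) = q ^ E0 * Oq q n ^ 2"
  proof -
    have "(\<Prod>j<2*n. f j) = (\<Prod>j<n. f j) * (\<Prod>i<n. f (n + i))"
      using prod_add_split[of f n n] by (simp add: mult_2)
    also have "\<dots> = q ^ (2 * tri n) * s ^ n * Oq q n ^ 2" by (simp add: L1 L2 power2_eq_square mult_ac)
    also have "q ^ (2 * tri n) * s ^ n = q ^ E0" by (simp only: s_def E0_def power_add power_mult)
    finally show ?thesis .
  qed
  also have "(\<Prod>j<2*n. f j) = (\<Sum>k\<le>2*n. qb (q^2) (2*n) k * (q^2) ^ tri k * 1 ^ k * s ^ (2*n - k))"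
    unfolding f_def by (rule qbin_hom[OF s0])
  also have "\<dots> = (\<Sum>k\<le>2*n. q ^ E0 * (qb (q^2) (2*n) k * q ^ Dk n k))"
  proof (intro sum.cong refl)
    fix k assume "k \<in> {..2*n}"
    then have e: "2 * tri k + (2*n-1)*(2*n-k) = Dk n k + E0" unfolding Dk_def E0_def
      using expo[of k n] n by simp
    have "(q^2) ^ tri k * s ^ (2*n - k) = q ^ (2 * tri k + (2*n-1)*(2*n-k))"
      by (simp add: s_def power_add power_mult)
    also have "\<dots> = q ^ (Dk n k + E0)" by (simp only: e)
    also have "\<dots> = q ^ E0 * q ^ Dk n k" by (simp only: power_add mult.commute)
    finally show "qb (q^2) (2*n) k * (q^2) ^ tri k * 1 ^ k * s ^ (2*n - k) = q ^ E0 * (qb (q^2) (2*n) k * q ^ Dk n k)"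
      by (simp add: mult_ac)
  qed
  also have "\<dots> = q ^ E0 * (\<Sum>k\<le>2*n. qb (q^2) (2*n) k * q ^ Dk n k)" by (simp add: sum_distrib_left)
  finally show ?thesis using q by simp
qed

lemma prod_lim_gen:
  fixes z :: "nat \<Rightarrow> complex"
  assumes s: "summable (\<lambda>k. norm (z k))" and nz: "\<And>k. z k \<noteq> -1"
  shows "(\<lambda>n. \<Prod>i<n. 1 + z i) \<longlonglongrightarrow> prodinf (\<lambda>i. 1 + z i)" "prodinf (\<lambda>i. 1 + z i) \<noteq> 0"
proof -
  have cp: "convergent_prod (\<lambda>i. 1 + z i)" by (rule summable_imp_convergent_prod_complex[OF s nz])
  have "(\<lambda>n. \<Prod>i\<le>n. 1 + z i) \<longlonglongrightarrow> prodinf (\<lambda>i. 1 + z i)" using convergent_prod_LIMSEQ[OF cp] by simp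
  then have "(\<lambda>n. \<Prod>i<Suc n. 1 + z i) \<longlonglongrightarrow> prodinf (\<lambda>i. 1 + z i)" by (simp add: lessThan_Suc_atMost)
  then show "(\<lambda>n. \<Prod>i<n. 1 + z i) \<longlonglongrightarrow> prodinf (\<lambda>i. 1 + z i)"
    by (rule filterlim_sequentially_Suc[THEN iffD1])
  have "\<And>i. 1 + z i \<noteq> 0" using nz by (metis add_eq_0_iff)
  then show "prodinf (\<lambda>i. 1 + z i) \<noteq> 0" by (rule prodinf_nonzero[OF cp])
qed

lemma summ_pow_le:
  assumes "norm (q::complex) < 1" "\<And>i. i \<le> f i"
  shows "summable (\<lambda>i. norm (q ^ f i))"
proof (rule summable_comparison_test[OF _ summable_geometric[of "norm q"]])
  show "\<exists>N. \<forall>n\<ge>N. norm (norm (q ^ f n)) \<le> norm q ^ n"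
    using assms by (auto simp: norm_power intro!: power_decreasing)
qed (use assms in simp)

lemma pow_neq_m1:
  assumes "norm (q::complex) < 1" "m > 0" shows "q ^ m \<noteq> -1" "q ^ m \<noteq> 1"
proof -
  have "norm (q ^ m) < 1" using assms by (simp add: norm_power power_less_one_iff)
  then show "q ^ m \<noteq> -1" "q ^ m \<noteq> 1" by auto
qed

definition Lqp :: "complex \<Rightarrow> complex" where "Lqp x = prodinf (\<lambda>i. 1 - x ^ Suc i)"

lemma qp_lim:
  assumes "norm x < 1"
  shows "qp x \<longlonglongrightarrow> Lqp x" "Lqp x \<noteq> 0"
proof -
  have s: "summable (\<lambda>k. norm (-(x ^ Suc k)))" using summ_pow_le[OF assms, of Suc] by simp
  have nz: "\<And>k. -(x ^ Suc k) \<noteq> -1" using pow_neq_m1(2)[OF assms] by (metis neg_equal_iff_equal zero_less_Suc)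
  have e: "qp x = (\<lambda>n. \<Prod>i<n. 1 - x ^ Suc i)" by (simp add: qp_def fun_eq_iff)
  show "qp x \<longlonglongrightarrow> Lqp x" unfolding e Lqp_def using prod_lim_gen(1)[OF s nz] by simp
  show "Lqp x \<noteq> 0" unfolding Lqp_def using prod_lim_gen(2)[OF s nz] by simp
qed

lemma qp_nz:
  assumes "norm x < 1" shows "qp x n \<noteq> 0"
proof -
  have "\<And>i. 1 - x ^ Suc i \<noteq> 0" using pow_neq_m1(2)[OF assms] by (metis right_minus_eq zero_less_Suc)
  then show ?thesis by (simp add: qp_def prod_zero_iff)
qed

definition LO :: "complex \<Rightarrow> complex" where "LO q = prodinf (\<lambda>i. 1 + q ^ (2 * i + 1))"

lemma Oq_lim:
  assumes "norm q < 1"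
  shows "Oq q \<longlonglongrightarrow> LO q" "LO q \<noteq> 0"
proof -
  have s: "summable (\<lambda>k. norm (q ^ (2 * k + 1)))" by (rule summ_pow_le[OF assms]) simp
  have nz: "\<And>k. q ^ (2 * k + 1) \<noteq> -1" by (rule pow_neq_m1(1)[OF assms]) simp
  have e: "Oq q = (\<lambda>n. \<Prod>i<n. 1 + q ^ (2 * i + 1))" by (simp add: Oq_def fun_eq_iff)
  show "Oq q \<longlonglongrightarrow> LO q" unfolding e LO_def by (rule prod_lim_gen(1)[OF s nz])
  show "LO q \<noteq> 0" unfolding LO_def by (rule prod_lim_gen(2)[OF s nz])
qed

definition cc :: "complex \<Rightarrow> nat \<Rightarrow> nat \<Rightarrow> complex" where
  "cc x n v = qp x n * qp x (2*n) / (qp x (n+v) * qp x (n-v))"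

lemma A_formula:
  assumes q: "q \<noteq> 0" "norm q < 1"
  shows "qp (q^2) n * Oq q n ^ 2 = cc (q^2) n 0 + (\<Sum>i<n. 2 * cc (q^2) n (Suc i) * q ^ ((Suc i)^2))"
proof -
  define x where "x = q^2"
  have xn: "norm x < 1" using q by (simp add: x_def norm_power power_less_one_iff)
  have nz: "\<And>m. qp x m \<noteq> 0" by (rule qp_nz[OF xn])
  have qbe: "\<And>k N. k \<le> N \<Longrightarrow> qb x N k = qp x N / (qp x k * qp x (N - k))"
  proof -
    fix k N :: nat assume "k \<le> N"
    from qb_ratio[OF this, of x] show "qb x N k = qp x N / (qp x k * qp x (N - k))"
      using nz by (simp add: field_simps)
  qed
  define g where "g k = qp x n * qb x (2*n) k * q ^ (Dk n k)" for k
  have "qp x n * Oq q n ^ 2 = (\<Sum>k\<le>2*n. g k)"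
    unfolding finite_triple[OF q(1)] g_def x_def by (simp add: sum_distrib_left mult.assoc)
  also have "\<dots> = (\<Sum>k<n + Suc n. g k)"
    by (intro sum.cong refl) auto
  also have "\<dots> = (\<Sum>k<n. g k) + (\<Sum>i<Suc n. g (n + i))" by (rule sum_add_split)
  also have "(\<Sum>i<Suc n. g (n + i)) = g n + (\<Sum>i<n. g (n + Suc i))"
    by (subst sum.lessThan_Suc_shift) simp
  also have "(\<Sum>k<n. g k) = (\<Sum>i<n. g (n - Suc i))" by (rule sum.nat_diff_reindex[symmetric])
  also have "g n = cc x n 0"
    using qbe[of n "2*n"] by (simp add: g_def cc_def Dk_def)
  also have "(\<Sum>i<n. g (n - Suc i)) = (\<Sum>i<n. cc x n (Suc i) * q ^ ((Suc i)^2))"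
  proof (intro sum.cong refl)
    fix i assume "i \<in> {..<n}"
    then have i: "i < n" by simp
    have d: "Dk n (n - Suc i) = (Suc i)^2" using i by (simp add: Dk_def)
    have e: "2 * n - (n - Suc i) = n + Suc i" using i by simp
    show "g (n - Suc i) = cc x n (Suc i) * q ^ ((Suc i)^2)"
      using qbe[of "n - Suc i" "2*n"] i unfolding g_def d cc_def e by (simp add: mult_ac)
  qed
  also have "(\<Sum>i<n. g (n + Suc i)) = (\<Sum>i<n. cc x n (Suc i) * q ^ ((Suc i)^2))"
  proof (intro sum.cong refl)
    fix i assume "i \<in> {..<n}"
    then have i: "i < n" by simp
    have d: "Dk n (n + Suc i) = (Suc i)^2" using i by (simp add: Dk_def)
    have e: "2 * n - (n + Suc i) = n - Suc i" using i by simp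
    show "g (n + Suc i) = cc x n (Suc i) * q ^ ((Suc i)^2)"
      using qbe[of "n + Suc i" "2*n"] i unfolding g_def d cc_def e by (simp add: mult_ac)
  qed
  finally have fin: "qp x n * Oq q n ^ 2 = (\<Sum>i<n. cc x n (Suc i) * q ^ ((Suc i)^2)) + (cc x n 0 + (\<Sum>i<n. cc x n (Suc i) * q ^ ((Suc i)^2)))" .
  have tw: "(\<Sum>i<n. 2 * cc x n (Suc i) * q ^ ((Suc i)^2)) = 2 * (\<Sum>i<n. cc x n (Suc i) * q ^ ((Suc i)^2))"
    by (simp add: sum_distrib_left mult.assoc)
  show ?thesis unfolding x_def[symmetric] tw fin by (simp only: mult_2 add_ac)
qed

definition Tq :: "complex \<Rightarrow> complex" where
  "Tq q = 1 + 2 * (\<Sum>v. q ^ (Suc v)^2)"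

lemma cc_lim:
  assumes x: "norm x < 1"
  shows "(\<lambda>n. cc x n v) \<longlonglongrightarrow> 1"
proof -
  have h1: "qp x \<longlonglongrightarrow> Lqp x" and L: "Lqp x \<noteq> 0" using qp_lim[OF x] by auto
  have sm: "strict_mono (\<lambda>n::nat. 2*n)" by (auto simp: strict_mono_def)
  have h2: "(\<lambda>n. qp x (2*n)) \<longlonglongrightarrow> Lqp x" using LIMSEQ_subseq_LIMSEQ[OF h1 sm] by (simp add: o_def)
  have h3: "(\<lambda>n. qp x (n+v)) \<longlonglongrightarrow> Lqp x" using LIMSEQ_ignore_initial_segment[OF h1] by simp
  have h4: "(\<lambda>n. qp x (n-v)) \<longlonglongrightarrow> Lqp x"
    by (rule LIMSEQ_offset[where k=v]) (simp add: h1)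
  have "(\<lambda>n. qp x n * qp x (2*n) / (qp x (n+v) * qp x (n-v))) \<longlonglongrightarrow> Lqp x * Lqp x / (Lqp x * Lqp x)"
    by (intro tendsto_intros h1 h2 h3 h4) (simp add: L)
  then show ?thesis using L by (simp add: cc_def)
qed

lemma A_lim:
  assumes q: "q \<noteq> 0" "norm q < 1"
  shows "(\<lambda>n. qp (q^2) n * Oq q n ^ 2) \<longlonglongrightarrow> Tq q"
proof -
  define x where "x = q^2"
  have xn: "norm x < 1" using q by (simp add: x_def norm_power power_less_one_iff)
  have h1: "qp x \<longlonglongrightarrow> Lqp x" and L: "Lqp x \<noteq> 0" using qp_lim[OF xn] by auto
  obtain B where B: "B > 0" "\<And>n. norm (qp x n) \<le> B"
    using BseqE[OF convergent_imp_Bseq[OF convergentI[OF h1]]] by blast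
  obtain B' where B': "B' > 0" "\<And>n. norm (inverse (qp x n)) \<le> B'"
    using BseqE[OF convergent_imp_Bseq[OF convergentI[OF tendsto_inverse[OF h1 L]]]] by blast
  define K where "K = B * B * B' * B'"
  have K0: "K \<ge> 0" using B B' by (simp add: K_def)
  have cb: "norm (cc x n v) \<le> K" for n v
  proof -
    have "norm (cc x n v) = norm (qp x n) * norm (qp x (2*n)) * norm (inverse (qp x (n+v))) * norm (inverse (qp x (n-v)))"
      by (simp add: cc_def norm_mult norm_divide divide_inverse)
    also have "\<dots> \<le> B * B * B' * B'"
      using B B' by (intro mult_mono) auto
    finally show ?thesis by (simp add: K_def)
  qed
  define a where "a v n = (if v = 0 then cc x n 0 else if v \<le> n then 2 * cc x n v * q ^ (v^2) else 0)" for v n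
  define b where "b v = (if v = 0 then 1 else 2 * q ^ (v^2))" for v
  define M where "M v = 2 * K * norm q ^ v" for v
  have lim: "(\<lambda>n. a v n) \<longlonglongrightarrow> b v" for v
  proof (cases "v = 0")
    case True then show ?thesis by (simp add: a_def b_def cc_lim[OF xn])
  next
    case False
    have "(\<lambda>n. 2 * cc x n v * q ^ (v^2)) \<longlonglongrightarrow> 2 * 1 * q ^ (v^2)"
      by (intro tendsto_intros cc_lim[OF xn])
    moreover have "eventually (\<lambda>n. 2 * cc x n v * q ^ (v^2) = a v n) sequentially"
      using eventually_ge_at_top[of v] by eventually_elim (simp add: a_def False)
    ultimately show ?thesis using False by (simp add: b_def Lim_transform_eventually)
  qed
  have bound: "eventually (\<lambda>(k,n). norm (a k n) \<le> M k) (at_top \<times>\<^sub>F sequentially)"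
  proof (rule always_eventually, clarify)
    fix k n
    show "norm (a k n) \<le> M k"
    proof (cases "k = 0")
      case True then show ?thesis using cb[of n 0] K0 by (simp add: a_def M_def)
    next
      case False
      show ?thesis
      proof (cases "k \<le> n")
        case True
        have "norm q ^ (k^2) \<le> norm q ^ k"
          using q by (intro power_decreasing) (auto simp: power2_eq_square)
        then have "norm (2 * cc x n k * q ^ (k^2)) \<le> 2 * K * norm q ^ k"
          using cb[of n k] K0 by (simp add: norm_mult norm_power mult_mono)
        then show ?thesis using False True by (simp add: a_def M_def)
      next
        case False2: False
        then show ?thesis using False K0 by (simp add: a_def M_def)
      qed
    qed
  qed
  have sM: "summable M" unfolding M_def
    using q by (intro summable_mult summable_geometric) simp
  from tannerys_theorem[OF lim bound sM]
  have T: "(\<lambda>n. suminf (\<lambda>k. a k n)) \<longlonglongrightarrow> suminf b" and sb: "summable (\<lambda>n. norm (b n))" by auto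
  have sA: "suminf (\<lambda>k. a k n) = qp x n * Oq q n ^ 2" for n
  proof -
    have "(\<lambda>k. a k n) sums (\<Sum>k\<le>n. a k n)" by (rule sums_finite) (auto simp: a_def)
    hence "suminf (\<lambda>k. a k n) = (\<Sum>k\<le>n. a k n)" by (rule sums_unique[symmetric])
    also have "\<dots> = a 0 n + (\<Sum>i<n. a (Suc i) n)" by (rule sum.atMost_shift)
    also have "\<dots> = cc x n 0 + (\<Sum>i<n. 2 * cc x n (Suc i) * q ^ ((Suc i)^2))"
      by (simp add: a_def)
    also have "\<dots> = qp x n * Oq q n ^ 2" unfolding x_def by (rule A_formula[OF q, symmetric])
    finally show ?thesis .
  qed
  have sq: "summable (\<lambda>v. q ^ (Suc v)^2)"
    by (rule summable_norm_cancel, rule summ_pow_le[OF q(2)]) (simp add: power2_eq_square)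
  have "suminf b = b 0 + (\<Sum>v. b (Suc v))"
    using suminf_split_head[OF summable_norm_cancel[OF sb]] by simp
  also have "(\<Sum>v. b (Suc v)) = (\<Sum>v. 2 * q ^ (Suc v)^2)" by (simp add: b_def)
  also have "\<dots> = 2 * (\<Sum>v. q ^ (Suc v)^2)" by (rule suminf_mult[OF sq])
  finally have sb2: "suminf b = b 0 + 2 * (\<Sum>v. q ^ (Suc v)^2)" .
  have "b 0 = 1" by (simp add: b_def)
  with sb2 have "suminf b = Tq q" by (simp add: Tq_def)
  with T sA show ?thesis by (simp add: x_def)
qed

lemma GP:
  assumes p: "p > (0::nat)"
  shows "(\<Prod>i<p*M. if p dvd Suc i then (1 - r ^ Suc i) ^ p else 1 - r ^ (Suc i * p)) * qp (r^(p*p)) M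
         = qp (r^p) (p*M) * qp (r^p) M ^ p"
proof (induction M)
  case 0 then show ?case by (simp add: qp_def)
next
  case (Suc M)
  define g where "g i = (if p dvd Suc i then (1 - r ^ Suc i) ^ p else 1 - r ^ (Suc i * p))" for i
  obtain p' where p': "p = Suc p'" using p by (cases p) auto
  have blk1: "(\<Prod>j<p. g (p*M + j)) = (\<Prod>j<p'. 1 - (r^p) ^ Suc (p*M + j)) * (1 - (r^p) ^ Suc M) ^ p"
  proof -
    have "(\<Prod>j<p. g (p*M + j)) = (\<Prod>j<p'. g (p*M + j)) * g (p*M + p')" by (simp add: p')
    also have "(\<Prod>j<p'. g (p*M + j)) = (\<Prod>j<p'. 1 - (r^p) ^ Suc (p*M + j))"
    proof (intro prod.cong refl)
      fix j assume "j \<in> {..<p'}"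
      then have j: "j < p'" by simp
      have nd: "\<not> p dvd Suc (p*M + j)"
      proof
        assume "p dvd Suc (p*M + j)"
        then have "p dvd p*M + Suc j" by (metis add_Suc_right)
        then have "p dvd Suc j" by (metis dvd_add_right_iff dvd_triv_left)
        moreover have "0 < Suc j" "Suc j < p" using j p' by auto
        ultimately show False using nat_dvd_not_less by blast
      qed
      have e: "r^(Suc(p*M+j)*p) = (r^p)^Suc(p*M+j)"
        by (simp only: mult.commute[of "Suc (p*M+j)" p] power_mult)
      have "g (p*M + j) = 1 - r^(Suc(p*M+j)*p)" using nd by (simp add: g_def)
      also have "\<dots> = 1 - (r^p) ^ Suc (p*M + j)" by (simp only: e)
      finally show "g (p*M + j) = 1 - (r^p) ^ Suc (p*M + j)" .
    qed
    also have "g (p*M + p') = (1 - (r^p) ^ Suc M) ^ p"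
    proof -
      have e: "Suc (p*M + p') = p * Suc M" using p' by simp
      show ?thesis unfolding g_def e by (simp add: power_mult power_add)
    qed
    finally show ?thesis .
  qed
  have blk2: "qp (r^p) (p*Suc M) = qp (r^p) (p*M) * (\<Prod>j<p'. 1 - (r^p) ^ Suc (p*M + j)) * (1 - (r^(p*p)) ^ Suc M)"
  proof -
    have "qp (r^p) (p*Suc M) = qp (r^p) (p*M) * (\<Prod>j<p. 1 - (r^p) ^ Suc (p*M + j))"
    proof -
      have e: "p*Suc M = p*M + p" by simp
      show ?thesis by (simp only: qp_def e prod_add_split)
    qed
    also have "(\<Prod>j<p. 1 - (r^p) ^ Suc (p*M + j)) = (\<Prod>j<p'. 1 - (r^p) ^ Suc (p*M + j)) * (1 - (r^p) ^ Suc (p*M + p'))"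
      by (simp add: p')
    also have "(r^p) ^ Suc (p*M + p') = (r^(p*p)) ^ Suc M"
    proof -
      have e: "Suc (p*M + p') = p * Suc M" using p' by simp
      show ?thesis unfolding e by (simp only: power_mult)
    qed
    finally show ?thesis by (simp add: mult_ac)
  qed
  have spl: "(\<Prod>i<p*Suc M. g i) = (\<Prod>i<p*M. g i) * (\<Prod>j<p. g (p*M + j))"
  proof -
    have e: "p*Suc M = p*M + p" by simp
    show ?thesis by (simp only: e prod_add_split)
  qed
  have IH: "(\<Prod>i<p*M. g i) * qp (r^(p*p)) M = qp (r^p) (p*M) * qp (r^p) M ^ p"
    unfolding g_def by (rule Suc.IH)
  have "(\<Prod>i<p*Suc M. g i) * qp (r^(p*p)) (Suc M)
      = (\<Prod>i<p*M. g i) * ((\<Prod>j<p'. 1 - (r^p) ^ Suc (p*M + j)) * (1 - (r^p) ^ Suc M) ^ p) * (qp (r^(p*p)) M * (1 - (r^(p*p)) ^ Suc M))"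
    by (simp only: spl blk1 qp_Suc)
  also have "\<dots> = ((\<Prod>i<p*M. g i) * qp (r^(p*p)) M) * (\<Prod>j<p'. 1 - (r^p) ^ Suc (p*M + j)) * (1 - (r^p) ^ Suc M) ^ p * (1 - (r^(p*p)) ^ Suc M)"
    by (simp only: mult_ac)
  also have "\<dots> = qp (r^p) (p*M) * qp (r^p) M ^ p * (\<Prod>j<p'. 1 - (r^p) ^ Suc (p*M + j)) * (1 - (r^p) ^ Suc M) ^ p * (1 - (r^(p*p)) ^ Suc M)"
    by (simp only: IH)
  also have "\<dots> = qp (r^p) (p*Suc M) * qp (r^p) (Suc M) ^ p"
    by (simp only: blk2 qp_Suc power_mult_distrib mult_ac)
  finally show ?case unfolding g_def .
qed

lemma Oq_Suc: "Oq q (Suc n) = Oq q n * (1 + q ^ (2 * n + 1))"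
  by (simp add: Oq_def)

lemma GO:
  assumes p: "odd (p::nat)"
  shows "(\<Prod>i<p*M. if p dvd (2*i+1) then (1 + s ^ (2*i+1)) ^ p else 1 + s ^ ((2*i+1) * p)) * Oq (s^(p*p)) M
         = Oq (s^p) (p*M) * Oq (s^p) M ^ p"
proof (induction M)
  case 0 then show ?case by (simp add: Oq_def)
next
  case (Suc M)
  define h where "h i = (if p dvd (2*i+1) then (1 + s ^ (2*i+1)) ^ p else 1 + s ^ ((2*i+1) * p))" for i
  define h0 where "h0 = p div 2"
  have ph: "p = 2 * h0 + 1" using p by (simp add: h0_def)
  have h0p: "h0 \<in> {..<p}" using ph by simp
  have ek: "2 * (p*M + h0) + 1 = p * (2*M+1)" using ph by (simp add: algebra_simps)
  define R where "R = (\<Prod>j\<in>{..<p} - {h0}. 1 + (s^p) ^ (2 * (p*M + j) + 1))"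
  have blk1: "(\<Prod>j<p. h (p*M + j)) = (1 + (s^p) ^ (2*M+1)) ^ p * R"
  proof -
    have "(\<Prod>j<p. h (p*M + j)) = h (p*M + h0) * (\<Prod>j\<in>{..<p} - {h0}. h (p*M + j))"
      by (rule prod.remove[OF _ h0p]) simp
    also have "h (p*M + h0) = (1 + (s^p) ^ (2*M+1)) ^ p"
      unfolding h_def ek by (simp only: dvd_triv_left if_True power_mult)
    also have "(\<Prod>j\<in>{..<p} - {h0}. h (p*M + j)) = R" unfolding R_def
    proof (intro prod.cong refl)
      fix j assume "j \<in> {..<p} - {h0}"
      then have j: "j < p" "j \<noteq> h0" by auto
      have nd: "\<not> p dvd 2 * (p*M + j) + 1"
      proof
        assume "p dvd 2 * (p*M + j) + 1"
        moreover have "2 * (p*M + j) + 1 = p * (2*M) + (2*j+1)" by (simp add: algebra_simps)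
        ultimately have "p dvd p * (2*M) + (2*j+1)" by metis
        then have "p dvd 2*j+1" by (metis dvd_add_right_iff dvd_triv_left)
        then obtain c where c: "2*j+1 = p * c" by blast
        have "c < 2"
        proof (rule ccontr)
          assume "\<not> c < 2"
          then have "p * 2 \<le> p * c" by simp
          with c j(1) show False by linarith
        qed
        moreover have "c \<noteq> 0" using c by (metis Suc_neq_Zero add_is_0 mult_0_right One_nat_def)
        ultimately have "c = 1" by simp
        with c ph have "j = h0" by simp
        with j show False by simp
      qed
      have e: "s ^ ((2 * (p*M + j) + 1) * p) = (s^p) ^ (2 * (p*M + j) + 1)"
        by (simp only: mult.commute[of "2 * (p*M + j) + 1" p] power_mult)
      have "h (p*M + j) = 1 + s ^ ((2 * (p*M + j) + 1) * p)" using nd by (simp add: h_def)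
      also have "\<dots> = 1 + (s^p) ^ (2 * (p*M + j) + 1)" by (simp only: e)
      finally show "h (p*M + j) = 1 + (s^p) ^ (2 * (p*M + j) + 1)" .
    qed
    finally show ?thesis .
  qed
  have blk2: "Oq (s^p) (p*Suc M) = Oq (s^p) (p*M) * (1 + (s^(p*p)) ^ (2*M+1)) * R"
  proof -
    have e: "p*Suc M = p*M + p" by simp
    have "Oq (s^p) (p*Suc M) = Oq (s^p) (p*M) * (\<Prod>j<p. 1 + (s^p) ^ (2 * (p*M + j) + 1))"
      by (simp only: Oq_def e prod_add_split)
    also have "(\<Prod>j<p. 1 + (s^p) ^ (2 * (p*M + j) + 1)) = (1 + (s^p) ^ (2 * (p*M + h0) + 1)) * R"
      unfolding R_def by (rule prod.remove[OF _ h0p]) simp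
    also have "(s^p) ^ (2 * (p*M + h0) + 1) = (s^(p*p)) ^ (2*M+1)"
      unfolding ek by (simp only: power_mult)
    finally show ?thesis by (simp only: mult_ac)
  qed
  have spl: "(\<Prod>i<p*Suc M. h i) = (\<Prod>i<p*M. h i) * (\<Prod>j<p. h (p*M + j))"
  proof -
    have e: "p*Suc M = p*M + p" by simp
    show ?thesis by (simp only: e prod_add_split)
  qed
  have IH: "(\<Prod>i<p*M. h i) * Oq (s^(p*p)) M = Oq (s^p) (p*M) * Oq (s^p) M ^ p"
    unfolding h_def by (rule Suc.IH)
  have "(\<Prod>i<p*Suc M. h i) * Oq (s^(p*p)) (Suc M)
      = (\<Prod>i<p*M. h i) * ((1 + (s^p) ^ (2*M+1)) ^ p * R) * (Oq (s^(p*p)) M * (1 + (s^(p*p)) ^ (2*M+1)))"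
    by (simp only: spl blk1 Oq_Suc)
  also have "\<dots> = ((\<Prod>i<p*M. h i) * Oq (s^(p*p)) M) * R * (1 + (s^p) ^ (2*M+1)) ^ p * (1 + (s^(p*p)) ^ (2*M+1))"
    by (simp only: mult_ac)
  also have "\<dots> = Oq (s^p) (p*M) * Oq (s^p) M ^ p * R * (1 + (s^p) ^ (2*M+1)) ^ p * (1 + (s^(p*p)) ^ (2*M+1))"
    by (simp only: IH)
  also have "\<dots> = Oq (s^p) (p*Suc M) * Oq (s^p) (Suc M) ^ p"
    by (simp only: blk2 Oq_Suc power_mult_distrib mult_ac)
  finally show ?case unfolding h_def .
qed

lemma prime_odd_dvd2:
  assumes "prime (p::nat)" "odd p"
  shows "p dvd 2 * m \<longleftrightarrow> p dvd m"
proof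
  assume "p dvd 2 * m"
  then have "p dvd 2 \<or> p dvd m" using assms(1) prime_dvd_mult_iff by blast
  moreover have "\<not> p dvd 2"
  proof
    assume "p dvd 2"
    then have "p \<le> 2" by (simp add: dvd_imp_le)
    moreover have "p \<ge> 2" using assms(1) prime_ge_2_nat by blast
    ultimately have "p = 2" by simp
    with assms(2) show False by simp
  qed
  ultimately show "p dvd m" by blast
qed simp

lemma PP:
  assumes p: "prime (p::nat)" "odd p"
  shows "(\<Prod>k<p. qp ((q * cis (2 * pi / real p) ^ k)^2) n)
       = (\<Prod>i<n. if p dvd Suc i then (1 - (q^2) ^ Suc i) ^ p else 1 - (q^2) ^ (Suc i * p))"
proof -
  define w where "w = cis (2 * pi / real p)"
  have p0: "p > 0" using p prime_gt_0_nat by blast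
  have "(\<Prod>k<p. qp ((q * w ^ k)^2) n) = (\<Prod>k<p. \<Prod>i<n. 1 - (q^2) ^ Suc i * w ^ ((2 * Suc i) * k))"
    unfolding qp_def
    by (intro prod.cong refl) (simp add: power_mult_distrib power_mult[symmetric] power_add mult_ac)
  also have "\<dots> = (\<Prod>i<n. \<Prod>k<p. 1 - (q^2) ^ Suc i * w ^ ((2 * Suc i) * k))"
    by (rule prod.swap)
  also have "\<dots> = (\<Prod>i<n. if p dvd Suc i then (1 - (q^2) ^ Suc i) ^ p else 1 - (q^2) ^ (Suc i * p))"
  proof (intro prod.cong refl)
    fix i
    show "(\<Prod>k<p. 1 - (q^2) ^ Suc i * w ^ ((2 * Suc i) * k)) = (if p dvd Suc i then (1 - (q^2) ^ Suc i) ^ p else 1 - (q^2) ^ (Suc i * p))"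
    proof (cases "p dvd Suc i")
      case True
      then have "p dvd 2 * Suc i" by (rule dvd_mult)
      then have "\<And>k. w ^ ((2 * Suc i) * k) = 1" unfolding w_def by (rule cyc3[OF p0])
      then show ?thesis using True by simp
    next
      case False
      then have "\<not> p dvd 2 * Suc i" using prime_odd_dvd2[OF p] by blast
      have c: "(\<Prod>k<p. 1 - (q^2) ^ Suc i * w ^ ((2 * Suc i) * k)) = 1 - ((q^2) ^ Suc i) ^ p"
        unfolding w_def by (rule cyc2[OF p(1) \<open>\<not> p dvd 2 * Suc i\<close>])
      have e: "((q^2) ^ Suc i) ^ p = (q^2) ^ (Suc i * p)" by (simp only: power_mult)
      show ?thesis unfolding if_not_P[OF False] c e ..
    qed
  qed
  finally show ?thesis by (simp add: w_def)
qed

lemma OO: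
  assumes p: "prime (p::nat)" "odd p"
  shows "(\<Prod>k<p. Oq (q * cis (2 * pi / real p) ^ k) n)
       = (\<Prod>i<n. if p dvd (2*i+1) then (1 + q ^ (2*i+1)) ^ p else 1 + q ^ ((2*i+1) * p))"
proof -
  define w where "w = cis (2 * pi / real p)"
  have p0: "p > 0" using p prime_gt_0_nat by blast
  have "(\<Prod>k<p. Oq (q * w ^ k) n) = (\<Prod>k<p. \<Prod>i<n. 1 + q ^ (2*i+1) * w ^ ((2*i+1) * k))"
    unfolding Oq_def
    by (intro prod.cong refl) (simp add: power_mult_distrib power_mult[symmetric] power_add mult_ac)
  also have "\<dots> = (\<Prod>i<n. \<Prod>k<p. 1 + q ^ (2*i+1) * w ^ ((2*i+1) * k))"
    by (rule prod.swap)
  also have "\<dots> = (\<Prod>i<n. if p dvd (2*i+1) then (1 + q ^ (2*i+1)) ^ p else 1 + q ^ ((2*i+1) * p))"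
  proof (intro prod.cong refl)
    fix i
    show "(\<Prod>k<p. 1 + q ^ (2*i+1) * w ^ ((2*i+1) * k)) = (if p dvd (2*i+1) then (1 + q ^ (2*i+1)) ^ p else 1 + q ^ ((2*i+1) * p))"
    proof (cases "p dvd (2*i+1)")
      case True
      then have "\<And>k. w ^ ((2*i+1) * k) = 1" unfolding w_def by (rule cyc3[OF p0])
      then show ?thesis using True by simp
    next
      case False
      have c: "(\<Prod>k<p. 1 + q ^ (2*i+1) * w ^ ((2*i+1) * k)) = 1 + (q ^ (2*i+1)) ^ p"
        unfolding w_def by (rule cyc2p[OF p False])
      have e: "(q ^ (2*i+1)) ^ p = q ^ ((2*i+1) * p)" by (simp only: power_mult)
      show ?thesis unfolding if_not_P[OF False] c e ..
    qed
  qed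
  finally show ?thesis by (simp add: w_def)
qed

definition Aq :: "complex \<Rightarrow> nat \<Rightarrow> complex" where
  "Aq z n = qp (z^2) n * Oq z n ^ 2"

lemma main_fin:
  assumes p: "prime (p::nat)" "odd p"
  shows "(\<Prod>k<p. Aq (q * cis (2 * pi / real p) ^ k) (p*M)) * Aq (q^(p*p)) M
       = Aq (q^p) (p*M) * Aq (q^p) M ^ p"
proof -
  define w where "w = cis (2 * pi / real p)"
  have p0: "p > 0" using p prime_gt_0_nat by blast
  define G where "G = (\<Prod>i<p*M. if p dvd Suc i then (1 - (q^2) ^ Suc i) ^ p else 1 - (q^2) ^ (Suc i * p))"
  define H where "H = (\<Prod>i<p*M. if p dvd (2*i+1) then (1 + q ^ (2*i+1)) ^ p else 1 + q ^ ((2*i+1) * p))"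
  have e1: "(q^(p*p))^2 = (q^2)^(p*p)" "(q^p)^2 = (q^2)^p" by (simp_all only: power_mult[symmetric] mult.commute)
  have g: "G * qp ((q^(p*p))^2) M = qp ((q^p)^2) (p*M) * qp ((q^p)^2) M ^ p"
    unfolding G_def e1 by (rule GP[OF p0])
  have h: "H * Oq (q^(p*p)) M = Oq (q^p) (p*M) * Oq (q^p) M ^ p"
    unfolding H_def by (rule GO[OF p(2)])
  have "(\<Prod>k<p. Aq (q * w ^ k) (p*M)) = (\<Prod>k<p. qp ((q * w ^ k)^2) (p*M)) * (\<Prod>k<p. Oq (q * w ^ k) (p*M)) ^ 2"
    by (simp add: Aq_def prod.distrib prod_power_distrib)
  also have "\<dots> = G * H ^ 2" unfolding G_def H_def w_def PP[OF p] OO[OF p] ..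
  finally have pr: "(\<Prod>k<p. Aq (q * w ^ k) (p*M)) = G * H ^ 2" .
  have pc: "(Oq (q^p) M ^ p)^2 = (Oq (q^p) M ^ 2)^p" by (simp only: power_mult[symmetric] mult.commute)
  have "(\<Prod>k<p. Aq (q * w ^ k) (p*M)) * Aq (q^(p*p)) M = (G * qp ((q^(p*p))^2) M) * (H * Oq (q^(p*p)) M) ^ 2"
    by (subst pr, subst Aq_def, simp only: power_mult_distrib mult_ac)
  also have "\<dots> = Aq (q^p) (p*M) * Aq (q^p) M ^ p"
    unfolding g h Aq_def by (simp only: pc power_mult_distrib mult_ac)
  finally show ?thesis by (simp add: w_def)
qed

lemma theta_Tq: "theta3 t = Tq (exp (of_real pi * \<i> * t))"
proof -
  have "\<And>v. exp (of_real pi * \<i> * of_nat (Suc v)^2 * t) = exp (of_real pi * \<i> * t) ^ (Suc v)^2"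
  proof -
    fix v
    have "exp (of_real pi * \<i> * t) ^ (Suc v)^2 = exp (of_nat ((Suc v)^2) * (of_real pi * \<i> * t))"
      by (rule exp_of_nat_mult[symmetric])
    also have "of_nat ((Suc v)^2) * (of_real pi * \<i> * t) = of_real pi * \<i> * of_nat (Suc v)^2 * (t::complex)"
      by (simp only: of_nat_power mult_ac)
    finally show "exp (of_real pi * \<i> * of_nat (Suc v)^2 * t) = exp (of_real pi * \<i> * t) ^ (Suc v)^2" by simp
  qed
  then show ?thesis unfolding theta3_def Tq_def by simp
qed

lemma Tq_nz:
  assumes z: "z \<noteq> 0" "norm z < 1"
  shows "Tq z \<noteq> 0"
proof -
  have zn: "norm (z^2) < 1" using z by (simp add: norm_power power_less_one_iff)
  have "(\<lambda>n. qp (z^2) n * Oq z n ^ 2) \<longlonglongrightarrow> Lqp (z^2) * LO z ^ 2"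
    by (intro tendsto_intros qp_lim(1)[OF zn] Oq_lim(1)[OF z(2)])
  moreover have "(\<lambda>n. qp (z^2) n * Oq z n ^ 2) \<longlonglongrightarrow> Tq z" by (rule A_lim[OF z])
  ultimately have "Tq z = Lqp (z^2) * LO z ^ 2" using LIMSEQ_unique by blast
  then show ?thesis using qp_lim(2)[OF zn] Oq_lim(2)[OF z(2)] by simp
qed

theorem lemma2p1:
  fixes p :: nat and \<tau> :: complex
  assumes "prime p" and "odd p" and "Im \<tau> > 0"
  shows "(\<Prod>k<p. theta3 (\<tau> + 2 * of_nat k / of_nat p))
           = theta3 (of_nat p * \<tau>) ^ (p + 1) / theta3 (of_nat p ^ 2 * \<tau>)"
proof -
  have p0: "p > 0" using assms(1) prime_gt_0_nat by blast
  define q where "q = exp (of_real pi * \<i> * \<tau>)"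
  define w where "w = cis (2 * pi / real p)"
  have q0: "q \<noteq> 0" by (simp add: q_def)
  have qn: "norm q < 1" using assms(3) by (simp add: q_def norm_exp_eq_Re)
  have nw: "norm (w ^ k) = 1" for k by (simp add: w_def norm_power)
  have th1: "theta3 (\<tau> + 2 * of_nat k / of_nat p) = Tq (q * w ^ k)" for k
  proof -
    have "w ^ k = cis (2 * pi * real k / real p)" unfolding w_def by (rule cis_pow_k)
    also have "\<dots> = exp (of_real pi * \<i> * (2 * of_nat k / of_nat p))"
      by (simp add: cis_conv_exp mult_ac)
    finally have "exp (of_real pi * \<i> * (\<tau> + 2 * of_nat k / of_nat p)) = q * w ^ k"
      by (simp add: q_def distrib_left exp_add)
    then show ?thesis by (simp add: theta_Tq)
  qed
  have th2: "theta3 (of_nat p * \<tau>) = Tq (q ^ p)"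
  proof -
    have "exp (of_real pi * \<i> * (of_nat p * \<tau>)) = exp (of_nat p * (of_real pi * \<i> * \<tau>))"
      by (simp only: mult_ac)
    also have "\<dots> = q ^ p" by (simp only: exp_of_nat_mult q_def)
    finally show ?thesis by (simp add: theta_Tq)
  qed
  have th3: "theta3 (of_nat p ^ 2 * \<tau>) = Tq (q ^ (p*p))"
  proof -
    have "exp (of_real pi * \<i> * (of_nat p ^ 2 * \<tau>)) = exp (of_nat (p*p) * (of_real pi * \<i> * \<tau>))"
      by (simp add: power2_eq_square mult_ac)
    also have "\<dots> = q ^ (p*p)" by (simp only: exp_of_nat_mult q_def)
    finally show ?thesis by (simp add: theta_Tq)
  qed
  have Alim: "Aq z \<longlonglongrightarrow> Tq z" if "z \<noteq> 0" "norm z < 1" for z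
    using A_lim[OF that] by (simp add: Aq_def[abs_def])
  have sm: "strict_mono (\<lambda>M. p * M)" using p0 by (auto simp: strict_mono_def)
  have Alim': "(\<lambda>M. Aq z (p * M)) \<longlonglongrightarrow> Tq z" if "z \<noteq> 0" "norm z < 1" for z
    using LIMSEQ_subseq_LIMSEQ[OF Alim[OF that] sm] by (simp add: o_def)
  have qk: "q * w ^ k \<noteq> 0" "norm (q * w ^ k) < 1" for k
    using q0 qn nw[of k] by (auto simp: norm_mult w_def)
  have qp1: "q ^ p \<noteq> 0" "norm (q ^ p) < 1" using q0 qn p0 by (auto simp: norm_power power_less_one_iff)
  have qp2: "q ^ (p*p) \<noteq> 0" "norm (q ^ (p*p)) < 1" using q0 qn p0 by (auto simp: norm_power power_less_one_iff)
  have L: "(\<lambda>M. (\<Prod>k<p. Aq (q * w ^ k) (p*M)) * Aq (q^(p*p)) M) \<longlonglongrightarrow> (\<Prod>k<p. Tq (q * w ^ k)) * Tq (q^(p*p))"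
    by (intro tendsto_mult tendsto_prod Alim' Alim qk qp2)
  have R: "(\<lambda>M. Aq (q^p) (p*M) * Aq (q^p) M ^ p) \<longlonglongrightarrow> Tq (q^p) * Tq (q^p) ^ p"
    by (intro tendsto_mult tendsto_power Alim' Alim qp1)
  have eq: "(\<lambda>M. (\<Prod>k<p. Aq (q * w ^ k) (p*M)) * Aq (q^(p*p)) M) = (\<lambda>M. Aq (q^p) (p*M) * Aq (q^p) M ^ p)"
    using main_fin[OF assms(1,2)] by (simp add: w_def fun_eq_iff)
  have "(\<Prod>k<p. Tq (q * w ^ k)) * Tq (q^(p*p)) = Tq (q^p) * Tq (q^p) ^ p"
    using L R unfolding eq by (rule LIMSEQ_unique)
  moreover have "Tq (q^(p*p)) \<noteq> 0" by (rule Tq_nz[OF qp2])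
  ultimately have "(\<Prod>k<p. Tq (q * w ^ k)) = Tq (q^p) ^ (p+1) / Tq (q^(p*p))"
    by (simp add: field_simps)
  then show ?thesis by (simp add: th1 th2 th3)
qed

end
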